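(* Let $(S_n,X_n)_{n\ge0}$ be an alternating non-homogeneous semi-Markov process with $S_0=1$, $X_0=0$ and Gamma semi-Markov kernels with shape functions $k_Y,k_Z$ taking values in $[1,\infty)$ and rate functions $\lambda_Y,\lambda_Z$ taking values in $(0,\infty)$, all measurable, such that $\lambda_Y(x)\le c$ and $\lambda_Z(x)\le c$ for all $x\ge0$ for some $c>0$. Then its renewal function satisfies $M(t)\le ct$ for all $t\ge 0$.
   Context: Let $(S_n,X_n)_{n\ge0}$ be random variables on a probability space with $S_n\in\{0,1\}$, $0=X_0\le X_1\le X_2\le\cdots$, $S_0=1$, and alternating states: $S_n=1$ for even $n$ and $S_n=0$ for odd $n$. Write $T_{n+1}=X_{n+1}-X_n$. The process is called an alternating non-homogeneous semi-Markov process with semi-Markov kernels $G_Y,G_Z$ if for every $n\ge 0$ the conditional distribution of $T_{n+1}$ given $(S_0,X_0),\dots,(S_n,X_n)$ depends only on $(S_n,X_n)$ (and not on $n$), with $\mathbb P(T_{n+1}\le \tau\mid S_n=1,X_n=x)=G_Y(x,\tau)$ and $\mathbb P(T_{n+1}\le\tau\mid S_n=0,X_n=x)=G_Z(x,\tau)$ for all $x,\tau\ge 0$; here for each $x\ge0$, $G_Y(x,\cdot)$ and $G_Z(x,\cdot)$ are distribution functions on $[0,\infty)$, jointly measurable in $(x,\tau)$, absolutely continuous with densities $g_Y(x,\cdot)$, $g_Z(x,\cdot)$. "Gamma semi-Markov kernels with shape $k_T$ and rate $\lambda_T$" means $g_T(x,\tau)=\lambda_T(x)^{k_T(x)}\tau^{k_T(x)-1}e^{-\lambda_T(x)\tau}/\Gamma(k_T(x))$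 for $\tau\ge 0$, $T\in\{Y,Z\}$. The cycle-counting process is $N(t)=\sup\{n\in\mathbb N_0: X_{2n}\le t\}$ and the renewal function is $M(t)=\mathbb E N(t)=\sum_{n=1}^\infty \mathbb P(X_{2n}\le t)$, $t\ge0$. *)

theory Defs
  imports "HOL-Probability.Probability"
begin

definition gamma_dens :: "real \<Rightarrow> real \<Rightarrow> real \<Rightarrow> real" where
  "gamma_dens k l t = (if 0 \<le> t then l powr k * t powr (k - 1) * exp (- l * t) / Gamma k else 0)"

definition gamma_kernel :: "(real \<Rightarrow> real) \<Rightarrow> (real \<Rightarrow> real) \<Rightarrow> real \<Rightarrow> real \<Rightarrow> real" where
  "gamma_kernel k l x \<tau> = (LINT s:{0..\<tau>}|lborel. gamma_dens (k x) (l x) s)"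

definition hist_sets :: "'a measure \<Rightarrow> (nat \<Rightarrow> 'a \<Rightarrow> nat) \<Rightarrow> (nat \<Rightarrow> 'a \<Rightarrow> real) \<Rightarrow> nat \<Rightarrow> 'a set set" where
  "hist_sets M S X n = sigma_sets (space M)
     (\<Union>i\<in>{..n}. {(\<lambda>\<omega>. (S i \<omega>, X i \<omega>)) -` B \<inter> space M | B. B \<in> sets (borel :: (nat \<times> real) measure)})"

text \<open>Alternating non-homogeneous semi-Markov process with kernels GY, GZ:
  P(T_{n+1} \<le> tau | history up to n) = G_{S_n}(X_n, tau) a.s., written via the
  defining property of conditional probability.\<close>
definition alt_semi_markov ::
  "'a measure \<Rightarrow> (nat \<Rightarrow> 'a \<Rightarrow> nat) \<Rightarrow> (nat \<Rightarrow> 'a \<Rightarrow> real)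
   \<Rightarrow> (real \<Rightarrow> real \<Rightarrow> real) \<Rightarrow> (real \<Rightarrow> real \<Rightarrow> real) \<Rightarrow> bool" where
  "alt_semi_markov M S X GY GZ \<longleftrightarrow>
     prob_space M \<and>
     (\<forall>n. S n \<in> measurable M (count_space UNIV) \<and> X n \<in> borel_measurable M) \<and>
     (\<forall>n. \<forall>\<omega>\<in>space M. S n \<omega> = (if even n then 1 else 0)) \<and>
     (\<forall>\<omega>\<in>space M. X 0 \<omega> = 0) \<and>
     (\<forall>n. \<forall>\<omega>\<in>space M. X n \<omega> \<le> X (Suc n) \<omega>) \<and>
     (\<forall>n \<tau> A. 0 \<le> \<tau> \<longrightarrow> A \<in> hist_sets M S X n \<longrightarrow>
        measure M (A \<inter> {\<omega>\<in>space M. X (Suc n) \<omega> - X n \<omega> \<le> \<tau>}) =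
        (LINT \<omega>:A|M. (if S n \<omega> = 1 then GY (X n \<omega>) \<tau> else GZ (X n \<omega>) \<tau>)))"

text \<open>Renewal function M(t) = sum_{n\<ge>1} P(X_{2n} \<le> t), in ennreal (may be infinite a priori).\<close>
definition renewal_fun :: "'a measure \<Rightarrow> (nat \<Rightarrow> 'a \<Rightarrow> real) \<Rightarrow> real \<Rightarrow> ennreal" where
  "renewal_fun M X t = (\<Sum>n. emeasure M {\<omega>\<in>space M. X (2 * Suc n) \<omega> \<le> t})"

end

theory Submission
  imports Defs
begin


lemma borel_measurable_Gamma_real[measurable]: "(Gamma :: real \<Rightarrow> real) \<in> borel_measurable borel"
proof -
  have "rGamma \<in> borel_measurable (borel :: real measure)"
    by (intro borel_measurable_continuous_onI continuous_on_rGamma)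
  hence "(\<lambda>x::real. inverse (rGamma x)) \<in> borel_measurable borel" by measurable
  thus ?thesis by (simp add: Gamma_def[abs_def])
qed

lemma gamma_dens_nonneg: "0 < l \<Longrightarrow> 0 < k \<Longrightarrow> 0 \<le> gamma_dens k l s"
  unfolding gamma_dens_def using Gamma_real_pos[of k] by auto

lemma gamma_dens_meas[measurable]: "gamma_dens k l \<in> borel_measurable borel"
  unfolding gamma_dens_def by measurable

lemma gamma_dens_total:
  assumes k: "0 < k" and l: "0 < l"
  shows "(gamma_dens k l has_integral 1) UNIV"
proof -
  define h where "h t = indicator {0..} t * t powr (k - 1) / exp t" for t :: real
  have hm[measurable]: "h \<in> borel_measurable borel" unfolding h_def by measurable
  have G: "ennreal (Gamma k) = (\<integral>\<^sup>+t. ennreal (h t) \<partial>lborel)"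
    using Gamma_conv_nn_integral_real[OF k] by (simp add: h_def)
  also have "\<dots> = ennreal l * (\<integral>\<^sup>+x. ennreal (h (0 + l * x)) \<partial>lborel)"
    using nn_integral_real_affine[of "\<lambda>t. ennreal (h t)" l 0] l by simp
  also have "\<dots> = (\<integral>\<^sup>+x. ennreal (Gamma k) * ennreal (gamma_dens k l x) \<partial>lborel)"
  proof -
    have "ennreal l * ennreal (h (0 + l * x)) = ennreal (Gamma k) * ennreal (gamma_dens k l x)" for x
    proof (cases "0 \<le> x")
      case True
      have "l * h (l * x) = l * ((l * x) powr (k - 1) / exp (l * x))"
        using True l by (simp add: h_def)
      also have "\<dots> = l powr k * x powr (k - 1) * exp (- l * x)"
        using True l by (simp add: powr_mult powr_diff exp_minus field_simps powr_def[of l k] powr_def[of l "k-1"])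
      also have "\<dots> = Gamma k * gamma_dens k l x"
        using True Gamma_real_pos[OF k] by (simp add: gamma_dens_def)
      finally show ?thesis using l ennreal_mult'[of l "h (l*x)"] ennreal_mult'[of "Gamma k" "gamma_dens k l x"]
          Gamma_real_pos[OF k] by simp
    next
      case False
      thus ?thesis using l by (simp add: h_def gamma_dens_def zero_le_mult_iff)
    qed
    thus ?thesis by (simp add: nn_integral_cmult[symmetric])
  qed
  also have "\<dots> = ennreal (Gamma k) * (\<integral>\<^sup>+x. ennreal (gamma_dens k l x) \<partial>lborel)"
    by (simp add: nn_integral_cmult)
  finally have "(\<integral>\<^sup>+x. ennreal (gamma_dens k l x) \<partial>lborel) = ennreal 1"
    using Gamma_real_pos[OF k] ennreal_mult_cancel_left[of "ennreal (Gamma k)" 1]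
    by (metis ennreal_1 ennreal_eq_0_iff ennreal_neq_top mult.right_neutral not_le)
  hence "has_bochner_integral lborel (gamma_dens k l) 1"
    by (intro has_bochner_integral_nn_integral) (auto intro: gamma_dens_nonneg k l)
  thus ?thesis using has_integral_integral_lborel
    by (metis has_bochner_integral_iff)
qed

lemma gamma_dens_integrable:
  assumes k: "0 < k" and l: "0 < l"
  shows "integrable lborel (gamma_dens k l)"
proof -
  have "gamma_dens k l absolutely_integrable_on UNIV"
    using gamma_dens_total[OF k l] gamma_dens_nonneg[OF l k]
    by (intro nonnegative_absolutely_integrable_1) (auto simp: integrable_on_def)
  hence "integrable lebesgue (gamma_dens k l)" by (simp add: set_integrable_def)
  thus ?thesis using integrable_completion[of "gamma_dens k l" lborel] by simp
qed

lemma gamma_dens_on: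
  assumes k: "0 < k" and l: "0 < l" and S: "S \<in> sets borel"
  shows "gamma_dens k l integrable_on S" "set_integrable lborel S (gamma_dens k l)"
    "(LINT x:S|lborel. gamma_dens k l x) = integral S (gamma_dens k l)"
proof -
  show 1: "set_integrable lborel S (gamma_dens k l)"
    unfolding set_integrable_def using gamma_dens_integrable[OF k l] S
    by (intro integrable_mult_indicator) auto
  show "gamma_dens k l integrable_on S" "(LINT x:S|lborel. gamma_dens k l x) = integral S (gamma_dens k l)"
    using set_borel_integral_eq_integral[OF 1] by auto
qed

lemma gamma_facts:
  assumes k: "1 \<le> k" and l: "0 < l"
  defines "g \<equiv> gamma_dens k l"
  shows gamma_split: "\<And>a. 0 \<le> a \<Longrightarrow> integral {0..a} g + integral {a..} g = 1"
    and gamma_haz: "\<And>s. 0 \<le> s \<Longrightarrow> g s \<le> l * integral {s..} g"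
    and gamma_bnd: "\<And>a. 0 \<le> a \<Longrightarrow> 0 \<le> integral {0..a} g \<and> integral {0..a} g \<le> 1"
    and gamma_step: "\<And>a b. 0 \<le> a \<Longrightarrow> a \<le> b \<Longrightarrow>
          integral {0..b} g - integral {0..a} g \<le> l * (b - a) * (1 - integral {0..a} g)"
proof -
  have k0: "0 < k" using k by simp
  have gnn: "\<And>x. 0 \<le> g x" unfolding g_def using gamma_dens_nonneg[OF l k0] .
  have gi: "\<And>S. S \<in> sets borel \<Longrightarrow> g integrable_on S" unfolding g_def using gamma_dens_on[OF k0 l] by blast
  have tot: "(g has_integral 1) {0..}"
  proof -
    have "((\<lambda>x. if x \<in> {0..} then g x else 0) has_integral 1) UNIV"
      using gamma_dens_total[OF k0 l] unfolding g_def
      by (rule has_integral_eq[rotated]) (auto simp: gamma_dens_def)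
    thus ?thesis using has_integral_restrict_UNIV by blast
  qed
  show split: "integral {0..a} g + integral {a..} g = 1" if a: "0 \<le> a" for a
  proof -
    have "(g has_integral (integral {0..a} g + integral {a..} g)) ({0..a} \<union> {a..})"
      by (intro has_integral_Un integrable_integral gi) (auto intro: negligible_subset[of "{a}"])
    moreover have "{0..a} \<union> {a..} = {0::real..}" using a by auto
    ultimately show ?thesis using tot has_integral_unique by metis
  qed
  show bnd: "0 \<le> integral {0..a} g \<and> integral {0..a} g \<le> 1" if a: "0 \<le> a" for a
  proof -
    have "0 \<le> integral {a..} g" by (intro integral_nonneg gi gnn) auto
    moreover have "0 \<le> integral {0..a} g" by (intro integral_nonneg gi gnn) auto
    ultimately show ?thesis using split[OF a] by linarith
  qed
  show haz: "g s \<le> l * integral {s..} g" if s: "0 \<le> s" for s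
  proof -
    have e: "((\<lambda>r. (g s * exp (l * s)) * exp (- l * r)) has_integral (g s * exp (l * s)) * (exp (- l * s) / l)) {s..}"
      by (intro has_integral_mult_right has_integral_exp_minus_to_infinity l)
    have eq: "(g s * exp (l * s)) * (exp (- l * s) / l) = g s / l"
      using l by (simp add: exp_minus field_simps)
    from e have e': "((\<lambda>r. (g s * exp (l * s)) * exp (- l * r)) has_integral g s / l) {s..}" 
      unfolding eq .
    have pw: "(g s * exp (l * s)) * exp (- l * r) \<le> g r" if r: "r \<in> {s..}" for r
    proof (cases "s = 0")
      case True thus ?thesis using gnn by (simp add: g_def gamma_dens_def)
    next
      case False
      hence s0: "0 < s" using s by simp
      have "s powr (k - 1) \<le> r powr (k - 1)" using r s k by (intro powr_mono2) auto
      hence "l powr k * s powr (k - 1) / Gamma k \<le> l powr k * r powr (k - 1) / Gamma k"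
        using Gamma_real_pos[OF k0] l by (intro divide_right_mono mult_left_mono) auto
      hence "l powr k * s powr (k - 1) / Gamma k * exp (- l * r) \<le> l powr k * r powr (k - 1) / Gamma k * exp (- l * r)"
        by (intro mult_right_mono) auto
      moreover have "(g s * exp (l * s)) * exp (- l * r) = l powr k * s powr (k - 1) / Gamma k * exp (- l * r)"
        using s by (simp add: g_def gamma_dens_def exp_minus field_simps)
      moreover have "g r = l powr k * r powr (k - 1) / Gamma k * exp (- l * r)"
        using s r by (simp add: g_def gamma_dens_def field_simps)
      ultimately show ?thesis by simp
    qed
    have "g s / l \<le> integral {s..} g"
      by (rule has_integral_le[OF e' integrable_integral[OF gi] pw]) auto
    thus ?thesis using l by (simp add: pos_divide_le_eq mult.commute)
  qed
  show "integral {0..b} g - integral {0..a} g \<le> l * (b - a) * (1 - integral {0..a} g)"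
    if a: "0 \<le> a" and ab: "a \<le> b" for a b
  proof -
    have comb: "integral {0..a} g + integral {a..b} g = integral {0..b} g"
      using a ab Henstock_Kurzweil_Integration.integral_combine[where a=0 and c=a and b=b and f=g] gi[of "{0..b}"] by auto
    have "integral {a..b} g \<le> integral {a..b} (\<lambda>_. l * integral {a..} g)"
    proof (rule integral_le[OF gi]) 
      fix s assume s: "s \<in> {a..b}"
      have "integral {s..} g \<le> integral {a..} g"
        using s gnn by (intro integral_subset_le gi) auto
      thus "g s \<le> l * integral {a..} g" using haz[of s] s a l
        by (smt (verit, best) atLeastAtMost_iff mult_left_mono)
    qed auto
    also have "\<dots> = l * (b - a) * (1 - integral {0..a} g)"
      using ab split[OF a] by simp
    finally show ?thesis using comb by simp
  qed
qed

lemma gamma_dens_meas'[measurable (raw)]: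
  assumes [measurable]: "f \<in> borel_measurable M" "g \<in> borel_measurable M" "h \<in> borel_measurable M"
  shows "(\<lambda>x. gamma_dens (f x) (g x) (h x)) \<in> borel_measurable M"
  unfolding gamma_dens_def by measurable

lemma gamma_kernel_meas:
  assumes [measurable]: "k \<in> borel_measurable borel" "l \<in> borel_measurable borel"
  shows "(\<lambda>x. gamma_kernel k l x \<tau>) \<in> borel_measurable borel"
  unfolding gamma_kernel_def set_lebesgue_integral_def
  by (rule lborel.borel_measurable_lebesgue_integral) measurable

lemma gamma_kernel_props:
  assumes k: "1 \<le> k x" and l: "0 < l x" and lc: "l x \<le> c"
  shows "\<And>\<tau>. 0 \<le> \<tau> \<Longrightarrow> 0 \<le> gamma_kernel k l x \<tau> \<and> gamma_kernel k l x \<tau> \<le> 1"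
    and "gamma_kernel k l x 0 = 0"
    and "\<And>a b. 0 \<le> a \<Longrightarrow> a \<le> b \<Longrightarrow>
      gamma_kernel k l x b - gamma_kernel k l x a \<le> c * (b - a) * (1 - gamma_kernel k l x a)"
proof -
  have k0: "0 < k x" using k by simp
  have eq: "gamma_kernel k l x \<tau> = integral {0..\<tau>} (gamma_dens (k x) (l x))" for \<tau>
    unfolding gamma_kernel_def using gamma_dens_on(3)[OF k0 l] by simp
  show "0 \<le> gamma_kernel k l x \<tau> \<and> gamma_kernel k l x \<tau> \<le> 1" if "0 \<le> \<tau>" for \<tau>
    unfolding eq using gamma_bnd[OF k l that] .
  show "gamma_kernel k l x 0 = 0" unfolding eq by simp
  show "gamma_kernel k l x b - gamma_kernel k l x a \<le> c * (b - a) * (1 - gamma_kernel k l x a)"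
    if a: "0 \<le> a" and ab: "a \<le> b" for a b
  proof -
    have "0 \<le> (b - a) * (1 - gamma_kernel k l x a)"
      using gamma_bnd[OF k l a] ab unfolding eq by simp
    hence "l x * (b - a) * (1 - gamma_kernel k l x a) \<le> c * (b - a) * (1 - gamma_kernel k l x a)"
      using lc by (metis mult.assoc mult_right_mono)
    thus ?thesis using gamma_step[OF k l a ab] unfolding eq by linarith
  qed
qed



lemma floor_char:
  fixes y :: real and J :: nat
  assumes "0 \<le> y"
  shows "(real J \<le> y \<and> y < real J + 1) \<longleftrightarrow> J = nat \<lfloor>y\<rfloor>"
proof
  assume "real J \<le> y \<and> y < real J + 1"
  hence "\<lfloor>y\<rfloor> = int J" by (intro floor_unique) auto
  thus "J = nat \<lfloor>y\<rfloor>" by simp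
next
  assume "J = nat \<lfloor>y\<rfloor>"
  moreover have "real (nat \<lfloor>y\<rfloor>) = of_int \<lfloor>y\<rfloor>" using assms by simp
  ultimately show "real J \<le> y \<and> y < real J + 1" by (simp add: of_int_floor_le)
qed

lemma le_floor_char:
  fixes y :: real and j :: nat
  assumes "0 \<le> y"
  shows "real j \<le> y \<longleftrightarrow> j \<le> nat \<lfloor>y\<rfloor>"
proof -
  have "real j \<le> y \<longleftrightarrow> int j \<le> \<lfloor>y\<rfloor>" by (simp add: le_floor_iff)
  moreover have "0 \<le> \<lfloor>y\<rfloor>" using assms by simp
  ultimately show ?thesis by (simp add: le_nat_iff)
qed

lemma iter_bound:
  fixes f :: "real \<Rightarrow> real"
  assumes d: "0 < \<delta>" and f0: "f 0 = 0"
    and fs: "\<And>a b. 0 \<le> a \<Longrightarrow> a \<le> b \<Longrightarrow> f b - f a \<le> c * (b - a) * (1 - f a)"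
  shows "f (real m * \<delta>) \<le> c * \<delta> * (\<Sum>j<m. 1 - f (real j * \<delta>))"
proof (induction m)
  case 0 thus ?case using f0 by simp
next
  case (Suc m)
  have "f (real (Suc m) * \<delta>) - f (real m * \<delta>) \<le> c * (real (Suc m) * \<delta> - real m * \<delta>) * (1 - f (real m * \<delta>))"
    using d by (intro fs) (auto intro: mult_right_mono)
  also have "\<dots> = c * \<delta> * (1 - f (real m * \<delta>))" by (simp add: algebra_simps)
  finally show ?case using Suc by (simp add: algebra_simps)
qed

lemma pw_kernel:
  fixes f :: "real \<Rightarrow> real"
  assumes d: "0 < \<delta>" and x: "0 \<le> x" and c: "0 \<le> c" and f0: "f 0 = 0"
    and fb: "\<And>\<tau>. 0 \<le> \<tau> \<Longrightarrow> 0 \<le> f \<tau> \<and> f \<tau> \<le> 1"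
    and fs: "\<And>a b. 0 \<le> a \<Longrightarrow> a \<le> b \<Longrightarrow> f b - f a \<le> c * (b - a) * (1 - f a)"
    and K: "K = nat \<lfloor>t / \<delta>\<rfloor>"
  shows "(\<Sum>J\<le>K. indicator {t - (real J + 1) * \<delta> <.. t - real J * \<delta>} x * f ((real J + 1) * \<delta>))
       \<le> c * \<delta> + c * \<delta> * (\<Sum>j\<in>{1..K}. indicator {..t - real j * \<delta>} x * (1 - f (real j * \<delta>)))"
proof -
  have rnn: "0 \<le> (\<Sum>j\<in>{1..K}. indicator {..t - real j * \<delta>} x * (1 - f (real j * \<delta>)))"
    using fb d by (intro sum_nonneg) (auto simp: indicator_def)
  show ?thesis
  proof (cases "x \<le> t")
    case False
    have "(\<Sum>J\<le>K. indicator {t - (real J + 1) * \<delta> <.. t - real J * \<delta>} x * f ((real J + 1) * \<delta>)) = 0"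
    proof (intro sum.neutral ballI)
      fix J assume "J \<in> {..K}"
      have "0 \<le> real J * \<delta>" using d by simp
      thus "indicator {t - (real J + 1) * \<delta> <.. t - real J * \<delta>} x * f ((real J + 1) * \<delta>) = 0"
        using False by (auto simp: indicator_def)
    qed
    thus ?thesis using rnn c d by (simp add: mult_nonneg_nonneg)
  next
    case True
    define y where "y = (t - x) / \<delta>"
    have y0: "0 \<le> y" using True d by (simp add: y_def)
    define J0 where "J0 = nat \<lfloor>y\<rfloor>"
    have J0K: "J0 \<le> K" unfolding J0_def K y_def using x d by (intro nat_mono floor_mono divide_right_mono) auto
    have inB: "x \<in> {t - (real J + 1) * \<delta> <.. t - real J * \<delta>} \<longleftrightarrow> J = J0" for J
    proof -
      have "x \<in> {t - (real J + 1) * \<delta> <.. t - real J * \<delta>} \<longleftrightarrow> (real J \<le> y \<and> y < real J + 1)"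
        using d by (auto simp: y_def field_simps)
      thus ?thesis using floor_char[OF y0] J0_def by simp
    qed
    have inA: "x \<in> {..t - real j * \<delta>} \<longleftrightarrow> j \<le> J0" for j
    proof -
      have "x \<in> {..t - real j * \<delta>} \<longleftrightarrow> real j \<le> y" using d by (auto simp: y_def field_simps)
      thus ?thesis using le_floor_char[OF y0] J0_def by simp
    qed
    have "(\<Sum>J\<le>K. indicator {t - (real J + 1) * \<delta> <.. t - real J * \<delta>} x * f ((real J + 1) * \<delta>))
        = (\<Sum>J\<in>{J0}. f ((real J + 1) * \<delta>))"
      unfolding indicator_def inB using J0K by (intro sum.mono_neutral_cong_right) auto
    also have "\<dots> = f (real (Suc J0) * \<delta>)" by (simp add: add.commute)
    also have "\<dots> \<le> c * \<delta> * (\<Sum>j<Suc J0. 1 - f (real j * \<delta>))" by (rule iter_bound[OF d f0 fs])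
    also have "(\<Sum>j<Suc J0. 1 - f (real j * \<delta>)) = 1 + (\<Sum>j\<in>{1..J0}. 1 - f (real j * \<delta>))"
    proof -
      have "{..<Suc J0} = insert 0 {1..J0}" by auto
      thus ?thesis using f0 by simp
    qed
    also have "(\<Sum>j\<in>{1..J0}. 1 - f (real j * \<delta>)) = (\<Sum>j\<in>{1..K}. indicator {..t - real j * \<delta>} x * (1 - f (real j * \<delta>)))"
      unfolding indicator_def inA using J0K by (intro sum.mono_neutral_cong_left) auto
    finally show ?thesis by (simp add: algebra_simps)
  qed
qed

lemma pw_lower:
  fixes x y t \<delta> :: real
  assumes d: "0 < \<delta>" and xy: "x \<le> y" and K: "K = nat \<lfloor>t / \<delta>\<rfloor>"
  shows "\<delta> * (\<Sum>j\<in>{1..K}. indicator {..t - real j * \<delta>} x * indicator {real j * \<delta> <..} (y - x))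
         \<le> max 0 (t - x) - max 0 (t - y)"
proof -
  define S where "S = {j\<in>{1..K}. x \<le> t - real j * \<delta> \<and> real j * \<delta> < y - x}"
  have sum_eq: "(\<Sum>j\<in>{1..K}. indicator {..t - real j * \<delta>} x * indicator {real j * \<delta> <..} (y - x)) = real (card S)"
    unfolding S_def by (simp add: indicator_def of_bool_def[symmetric] Int_def)
  show ?thesis
  proof (cases "S = {}")
    case True thus ?thesis using sum_eq xy by simp
  next
    case False
    then obtain j1 where "j1 \<in> S" by auto
    hence xt: "x \<le> t" using d unfolding S_def by (auto intro: order_trans[of _ "t - real j1 * \<delta>"])
    define m0 where "m0 = min (y - x) (t - x)"
    have m00: "0 \<le> m0" using xt xy by (simp add: m0_def)
    have "S \<subseteq> {1..nat \<lfloor>m0 / \<delta>\<rfloor>}"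
    proof
      fix j assume "j \<in> S"
      hence "real j * \<delta> \<le> m0" unfolding S_def m0_def by auto
      hence "real j \<le> m0 / \<delta>" using d by (simp add: field_simps)
      thus "j \<in> {1..nat \<lfloor>m0 / \<delta>\<rfloor>}" using le_floor_char[of "m0/\<delta>" j] m00 d \<open>j \<in> S\<close> unfolding S_def by auto
    qed
    hence "card S \<le> nat \<lfloor>m0 / \<delta>\<rfloor>" by (metis card_atLeastAtMost card_mono finite_atLeastAtMost diff_Suc_1)
    hence "real (card S) \<le> m0 / \<delta>" using m00 d
      by (metis le_floor_char divide_nonneg_pos)
    hence "\<delta> * real (card S) \<le> m0" using d by (simp add: field_simps)
    moreover have "m0 \<le> max 0 (t - x) - max 0 (t - y)" using xt xy by (auto simp: m0_def)
    ultimately show ?thesis using sum_eq by simp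
  qed
qed



context
  fixes M :: "'a measure" and X :: "nat \<Rightarrow> 'a \<Rightarrow> real" and F :: "nat \<Rightarrow> real \<Rightarrow> 'a \<Rightarrow> real"
    and c t :: real
  assumes P: "prob_space M"
    and Xm[measurable]: "\<And>n. X n \<in> borel_measurable M"
    and X0: "\<And>\<omega>. \<omega> \<in> space M \<Longrightarrow> X 0 \<omega> = 0"
    and Xmono: "\<And>n \<omega>. \<omega> \<in> space M \<Longrightarrow> X n \<omega> \<le> X (Suc n) \<omega>"
    and ker: "\<And>n \<tau> B. 0 \<le> \<tau> \<Longrightarrow> B \<in> sets borel \<Longrightarrow>
       measure M ({\<omega>\<in>space M. X n \<omega> \<in> B} \<inter> {\<omega>\<in>space M. X (Suc n) \<omega> - X n \<omega> \<le> \<tau>})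
        = (LINT \<omega>:{\<omega>\<in>space M. X n \<omega> \<in> B}|M. F n \<tau> \<omega>)"
    and Fm[measurable]: "\<And>n \<tau>. F n \<tau> \<in> borel_measurable M"
    and Fb: "\<And>n \<tau> \<omega>. \<omega> \<in> space M \<Longrightarrow> 0 \<le> \<tau> \<Longrightarrow> 0 \<le> F n \<tau> \<omega> \<and> F n \<tau> \<omega> \<le> 1"
    and F0: "\<And>n \<omega>. \<omega> \<in> space M \<Longrightarrow> F n 0 \<omega> = 0"
    and Fs: "\<And>n a b \<omega>. \<omega> \<in> space M \<Longrightarrow> 0 \<le> a \<Longrightarrow> a \<le> b \<Longrightarrow>
       F n b \<omega> - F n a \<omega> \<le> c * (b - a) * (1 - F n a \<omega>)"
    and c: "0 < c" and t: "0 \<le> t"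
begin

lemma Xnn: "\<omega> \<in> space M \<Longrightarrow> 0 \<le> X n \<omega>"
  by (induction n) (auto simp: X0 intro: order_trans[OF _ Xmono])

lemma intb: fixes B :: real shows "f \<in> borel_measurable M \<Longrightarrow> (\<And>\<omega>. \<omega> \<in> space M \<Longrightarrow> \<bar>f \<omega>\<bar> \<le> B) \<Longrightarrow> integrable M f"
proof -
  interpret prob_space M by (rule P)
  show "f \<in> borel_measurable M \<Longrightarrow> (\<And>\<omega>. \<omega> \<in> space M \<Longrightarrow> \<bar>f \<omega>\<bar> \<le> B) \<Longrightarrow> integrable M f"
    by (rule integrable_const_bound[where B=B]) (auto intro!: AE_I2)
qed

lemma step:
  assumes d: "0 < \<delta>"
  shows "measure M {\<omega>\<in>space M. X (Suc n) \<omega> \<le> t}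
    \<le> c * \<delta> + c * ((\<integral>\<omega>. max 0 (t - X n \<omega>) \<partial>M) - (\<integral>\<omega>. max 0 (t - X (Suc n) \<omega>) \<partial>M))"
proof -
  interpret prob_space M by (rule P)
  define K where "K = nat \<lfloor>t / \<delta>\<rfloor>"
  define BJ where "BJ J = {t - (real J + 1) * \<delta> <.. t - real J * \<delta>}" for J :: nat
  define AJ where "AJ j = {..t - real j * \<delta>}" for j :: nat
  define E where "E B = {\<omega>\<in>space M. X n \<omega> \<in> B}" for B
  define Tle where "Tle \<tau> = {\<omega>\<in>space M. X (Suc n) \<omega> - X n \<omega> \<le> \<tau>}" for \<tau>
  define Tgt where "Tgt \<tau> = {\<omega>\<in>space M. \<tau> < X (Suc n) \<omega> - X n \<omega>}" for \<tau>
  have Esets[measurable]: "B \<in> sets borel \<Longrightarrow> E B \<in> sets M" for B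
    using measurable_sets[OF Xm[of n], of B] unfolding E_def by (simp add: vimage_def Int_def conj_commute)
  have Tsets[measurable]: "Tle \<tau> \<in> sets M" "Tgt \<tau> \<in> sets M" for \<tau> unfolding Tle_def Tgt_def by measurable
  have BJb[measurable]: "BJ J \<in> sets borel" for J unfolding BJ_def by simp
  have AJb[measurable]: "AJ j \<in> sets borel" for j unfolding AJ_def by simp
  have indE: "indicator (E B) \<omega> = (indicator B (X n \<omega>) :: real)" if "\<omega> \<in> space M" for B \<omega>
    using that by (simp add: E_def indicator_def)
  have ker': "measure M (E B \<inter> Tle \<tau>) = (\<integral>\<omega>. indicator (E B) \<omega> * F n \<tau> \<omega> \<partial>M)"
    if "0 \<le> \<tau>" "B \<in> sets borel" for \<tau> B
    using ker[OF that] by (simp add: E_def Tle_def set_lebesgue_integral_def)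
  have intF: "integrable M (\<lambda>\<omega>. indicator (E B) \<omega> * F n \<tau> \<omega>)" if "0 \<le> \<tau>" "B \<in> sets borel" for \<tau> B
    using that Fb by (intro intb[where B=1]) (auto simp: indicator_def abs_le_iff)
  have intI: "integrable M (\<lambda>\<omega>. indicator A \<omega> :: real)" if "A \<in> sets M" for A
    using that by (intro intb[where B=1]) (auto simp: indicator_def)
  have cover: "{\<omega>\<in>space M. X (Suc n) \<omega> \<le> t} \<subseteq> (\<Union>J\<in>{..K}. E (BJ J) \<inter> Tle ((real J + 1) * \<delta>))"
  proof
    fix \<omega> assume \<omega>: "\<omega> \<in> {\<omega>\<in>space M. X (Suc n) \<omega> \<le> t}"
    hence sp: "\<omega> \<in> space M" and yt: "X (Suc n) \<omega> \<le> t" by auto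
    define y where "y = (t - X n \<omega>) / \<delta>"
    define J0 where "J0 = nat \<lfloor>y\<rfloor>"
    have xy: "X n \<omega> \<le> X (Suc n) \<omega>" using Xmono[OF sp] .
    have y0: "0 \<le> y" using xy yt d by (simp add: y_def)
    have J0: "real J0 \<le> y \<and> y < real J0 + 1" using floor_char[OF y0] J0_def by simp
    have "J0 \<le> K" unfolding J0_def K_def y_def using Xnn[OF sp] d
      by (intro nat_mono floor_mono divide_right_mono) auto
    moreover have "\<omega> \<in> E (BJ J0)" using J0 d sp unfolding E_def BJ_def y_def by (auto simp: field_simps)
    moreover have "\<omega> \<in> Tle ((real J0 + 1) * \<delta>)" using J0 d sp yt unfolding Tle_def y_def by (auto simp: field_simps)
    ultimately show "\<omega> \<in> (\<Union>J\<in>{..K}. E (BJ J) \<inter> Tle ((real J + 1) * \<delta>))" by auto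
  qed
  have "measure M {\<omega>\<in>space M. X (Suc n) \<omega> \<le> t} \<le> measure M (\<Union>J\<in>{..K}. E (BJ J) \<inter> Tle ((real J + 1) * \<delta>))"
    by (intro finite_measure_mono[OF cover]) measurable
  also have "\<dots> \<le> (\<Sum>J\<le>K. measure M (E (BJ J) \<inter> Tle ((real J + 1) * \<delta>)))"
    by (intro finite_measure_subadditive_finite) auto
  also have "\<dots> = (\<Sum>J\<le>K. \<integral>\<omega>. indicator (E (BJ J)) \<omega> * F n ((real J + 1) * \<delta>) \<omega> \<partial>M)"
    using d by (intro sum.cong refl ker') auto
  also have "\<dots> = (\<integral>\<omega>. (\<Sum>J\<le>K. indicator (E (BJ J)) \<omega> * F n ((real J + 1) * \<delta>) \<omega>) \<partial>M)"
    using d by (intro Bochner_Integration.integral_sum[symmetric] intF) auto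
  also have "\<dots> \<le> (\<integral>\<omega>. c * \<delta> + c * \<delta> * (\<Sum>j\<in>{1..K}. indicator (E (AJ j)) \<omega> * (1 - F n (real j * \<delta>) \<omega>)) \<partial>M)"
  proof (rule integral_mono)
    show "integrable M (\<lambda>\<omega>. \<Sum>J\<le>K. indicator (E (BJ J)) \<omega> * F n ((real J + 1) * \<delta>) \<omega>)"
      using d by (intro Bochner_Integration.integrable_sum intF) auto
    have "integrable M (\<lambda>\<omega>. indicator (E (AJ j)) \<omega> * (1 - F n (real j * \<delta>) \<omega>))" for j
      using d Fb by (intro intb[where B=1]) (auto simp: indicator_def abs_le_iff)
    thus "integrable M (\<lambda>\<omega>. c * \<delta> + c * \<delta> * (\<Sum>j\<in>{1..K}. indicator (E (AJ j)) \<omega> * (1 - F n (real j * \<delta>) \<omega>)))"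
      by (intro Bochner_Integration.integrable_add Bochner_Integration.integrable_mult_right Bochner_Integration.integrable_sum) auto
    fix \<omega> assume sp: "\<omega> \<in> space M"
    show "(\<Sum>J\<le>K. indicator (E (BJ J)) \<omega> * F n ((real J + 1) * \<delta>) \<omega>)
      \<le> c * \<delta> + c * \<delta> * (\<Sum>j\<in>{1..K}. indicator (E (AJ j)) \<omega> * (1 - F n (real j * \<delta>) \<omega>))"
      unfolding indE[OF sp] BJ_def AJ_def
      using pw_kernel[OF d Xnn[OF sp] _ F0[OF sp] Fb[OF sp] Fs[OF sp] K_def] c by simp
  qed
  also have "\<dots> = c * \<delta> + c * \<delta> * (\<Sum>j\<in>{1..K}. measure M (E (AJ j) \<inter> Tgt (real j * \<delta>)))"
  proof -
    have eqj: "(\<integral>\<omega>. indicator (E (AJ j)) \<omega> * (1 - F n (real j * \<delta>) \<omega>) \<partial>M) = measure M (E (AJ j) \<inter> Tgt (real j * \<delta>))" for j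
    proof -
      have "(\<integral>\<omega>. indicator (E (AJ j)) \<omega> * (1 - F n (real j * \<delta>) \<omega>) \<partial>M)
          = (\<integral>\<omega>. indicator (E (AJ j)) \<omega> - indicator (E (AJ j)) \<omega> * F n (real j * \<delta>) \<omega> \<partial>M)"
        by (simp add: algebra_simps)
      also have "\<dots> = measure M (E (AJ j)) - measure M (E (AJ j) \<inter> Tle (real j * \<delta>))"
      proof -
        have Esp: "E (AJ j) \<inter> space M = E (AJ j)" by (auto simp: E_def)
        have "(\<integral>\<omega>. indicator (E (AJ j)) \<omega> * F n (real j * \<delta>) \<omega> \<partial>M) = measure M (E (AJ j) \<inter> Tle (real j * \<delta>))"
          using d by (intro ker'[symmetric]) auto
        moreover have "integrable M (\<lambda>\<omega>. indicator (E (AJ j)) \<omega> * F n (real j * \<delta>) \<omega>)"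
          using d by (intro intF) auto
        ultimately show ?thesis
          by (subst Bochner_Integration.integral_diff) (auto intro!: intI simp: Esp)
      qed
      also have "\<dots> = measure M (E (AJ j) - E (AJ j) \<inter> Tle (real j * \<delta>))"
        by (rule finite_measure_Diff[symmetric]) auto
      also have "E (AJ j) - E (AJ j) \<inter> Tle (real j * \<delta>) = E (AJ j) \<inter> Tgt (real j * \<delta>)"
        by (auto simp: E_def Tle_def Tgt_def)
      finally show ?thesis .
    qed
    have "(\<integral>\<omega>. c * \<delta> + c * \<delta> * (\<Sum>j\<in>{1..K}. indicator (E (AJ j)) \<omega> * (1 - F n (real j * \<delta>) \<omega>)) \<partial>M)
        = c * \<delta> + c * \<delta> * (\<Sum>j\<in>{1..K}. \<integral>\<omega>. indicator (E (AJ j)) \<omega> * (1 - F n (real j * \<delta>) \<omega>) \<partial>M)"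
    proof -
      have ij: "integrable M (\<lambda>\<omega>. indicator (E (AJ j)) \<omega> * (1 - F n (real j * \<delta>) \<omega>))" for j
        using d Fb by (intro intb[where B=1]) (auto simp: indicator_def abs_le_iff)
      let ?S = "\<lambda>\<omega>. \<Sum>j\<in>{1..K}. indicator (E (AJ j)) \<omega> * (1 - F n (real j * \<delta>) \<omega>)"
      have iS: "integrable M ?S" by (intro Bochner_Integration.integrable_sum ij)
      have "(\<integral>\<omega>. c * \<delta> + c * \<delta> * ?S \<omega> \<partial>M) = (\<integral>\<omega>. c * \<delta> \<partial>M) + (\<integral>\<omega>. c * \<delta> * ?S \<omega> \<partial>M)"
        using iS by (intro Bochner_Integration.integral_add) auto
      also have "(\<integral>\<omega>. c * \<delta> \<partial>M) = c * \<delta>" by (simp add: prob_space)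
      also have "(\<integral>\<omega>. c * \<delta> * ?S \<omega> \<partial>M) = c * \<delta> * (\<integral>\<omega>. ?S \<omega> \<partial>M)"
        by (rule integral_mult_right_zero)
      also have "(\<integral>\<omega>. ?S \<omega> \<partial>M) = (\<Sum>j\<in>{1..K}. \<integral>\<omega>. indicator (E (AJ j)) \<omega> * (1 - F n (real j * \<delta>) \<omega>) \<partial>M)"
        by (intro Bochner_Integration.integral_sum ij)
      finally show ?thesis .
    qed
    thus ?thesis using eqj by simp
  qed
  also have "\<dots> \<le> c * \<delta> + c * ((\<integral>\<omega>. max 0 (t - X n \<omega>) \<partial>M) - (\<integral>\<omega>. max 0 (t - X (Suc n) \<omega>) \<partial>M))"
  proof -
    have i1: "integrable M (\<lambda>\<omega>. max 0 (t - X m \<omega>))" for m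
      using Xnn t by (intro intb[where B=t]) auto
    have ii: "integrable M (\<lambda>\<omega>. indicator (E (AJ j) \<inter> Tgt (real j * \<delta>)) \<omega> :: real)" for j
      by (intro intI) auto
    have "\<delta> * (\<Sum>j\<in>{1..K}. measure M (E (AJ j) \<inter> Tgt (real j * \<delta>)))
        = (\<integral>\<omega>. \<delta> * (\<Sum>j\<in>{1..K}. indicator (E (AJ j) \<inter> Tgt (real j * \<delta>)) \<omega>) \<partial>M)"
    proof -
      have "E (AJ j) \<inter> Tgt (real j * \<delta>) \<inter> space M = E (AJ j) \<inter> Tgt (real j * \<delta>)" for j
        by (auto simp: E_def)
      thus ?thesis using ii by (simp add: Bochner_Integration.integral_sum)
    qed
    also have "\<dots> \<le> (\<integral>\<omega>. max 0 (t - X n \<omega>) - max 0 (t - X (Suc n) \<omega>) \<partial>M)"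
    proof (rule integral_mono)
      show "integrable M (\<lambda>\<omega>. \<delta> * (\<Sum>j\<in>{1..K}. indicator (E (AJ j) \<inter> Tgt (real j * \<delta>)) \<omega>))"
        using ii by (intro Bochner_Integration.integrable_mult_right Bochner_Integration.integrable_sum) auto
      show "integrable M (\<lambda>\<omega>. max 0 (t - X n \<omega>) - max 0 (t - X (Suc n) \<omega>))"
        using i1 by (intro Bochner_Integration.integrable_diff)
      fix \<omega> assume sp: "\<omega> \<in> space M"
      have "indicator (E (AJ j) \<inter> Tgt (real j * \<delta>)) \<omega>
          = indicator {..t - real j * \<delta>} (X n \<omega>) * (indicator {real j * \<delta> <..} (X (Suc n) \<omega> - X n \<omega>) :: real)" for j
        using sp by (simp add: E_def AJ_def Tgt_def indicator_def)
      thus "\<delta> * (\<Sum>j\<in>{1..K}. indicator (E (AJ j) \<inter> Tgt (real j * \<delta>)) \<omega>)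
        \<le> max 0 (t - X n \<omega>) - max 0 (t - X (Suc n) \<omega>)"
        using pw_lower[OF d Xmono[OF sp] K_def] by simp
    qed
    also have "\<dots> = (\<integral>\<omega>. max 0 (t - X n \<omega>) \<partial>M) - (\<integral>\<omega>. max 0 (t - X (Suc n) \<omega>) \<partial>M)"
      by (rule Bochner_Integration.integral_diff[OF i1 i1])
    finally have "\<delta> * (\<Sum>j\<in>{1..K}. measure M (E (AJ j) \<inter> Tgt (real j * \<delta>)))
      \<le> (\<integral>\<omega>. max 0 (t - X n \<omega>) \<partial>M) - (\<integral>\<omega>. max 0 (t - X (Suc n) \<omega>) \<partial>M)" .
    hence "c * (\<delta> * (\<Sum>j\<in>{1..K}. measure M (E (AJ j) \<inter> Tgt (real j * \<delta>))))
      \<le> c * ((\<integral>\<omega>. max 0 (t - X n \<omega>) \<partial>M) - (\<integral>\<omega>. max 0 (t - X (Suc n) \<omega>) \<partial>M))"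
      using c by (intro mult_left_mono) auto
    thus ?thesis by (simp add: algebra_simps)
  qed
  finally show ?thesis .
qed

lemma total: "(\<Sum>m<N. measure M {\<omega>\<in>space M. X (Suc m) \<omega> \<le> t}) \<le> c * t"
proof (rule field_le_epsilon)
  fix e :: real assume e: "0 < e"
  interpret prob_space M by (rule P)
  define \<delta> where "\<delta> = e / (real N * c + 1)"
  have Nc: "0 \<le> real N * c" using c by simp
  have d: "0 < \<delta>" using e Nc by (simp add: \<delta>_def)
  define b where "b m = (\<integral>\<omega>. max 0 (t - X m \<omega>) \<partial>M)" for m
  have "(\<Sum>m<N. measure M {\<omega>\<in>space M. X (Suc m) \<omega> \<le> t}) \<le> (\<Sum>m<N. c * \<delta> + c * (b m - b (Suc m)))"
    unfolding b_def by (intro sum_mono step d)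
  also have "\<dots> = real N * c * \<delta> + c * (b 0 - b N)"
    by (simp add: sum.distrib sum_distrib_left[symmetric] sum_lessThan_telescope')
  also have "b 0 = t"
  proof -
    have "b 0 = (\<integral>\<omega>. t \<partial>M)" unfolding b_def using t X0 by (intro Bochner_Integration.integral_cong) auto
    thus ?thesis by (simp add: prob_space)
  qed
  also have "0 \<le> b N" unfolding b_def by (intro Bochner_Integration.integral_nonneg) auto
  hence "real N * c * \<delta> + c * (t - b N) \<le> real N * c * \<delta> + c * t" using c by simp
  also have "real N * c * \<delta> \<le> e"
  proof -
    have "real N * c * \<delta> = e * (real N * c / (real N * c + 1))" by (simp add: \<delta>_def field_simps)
    also have "\<dots> \<le> e * 1" using e Nc by (intro mult_left_mono) auto
    finally show ?thesis by simp
  qed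
  finally show "(\<Sum>m<N. measure M {\<omega>\<in>space M. X (Suc m) \<omega> \<le> t}) \<le> c * t + e" by simp
qed

lemma renewal_le: "(\<Sum>n. emeasure M {\<omega>\<in>space M. X (2 * Suc n) \<omega> \<le> t}) \<le> ennreal (c * t)"
proof (rule suminf_le_const[OF summableI])
  interpret prob_space M by (rule P)
  fix N
  let ?f = "\<lambda>m. measure M {\<omega>\<in>space M. X (Suc m) \<omega> \<le> t}"
  have "(\<Sum>n<N. emeasure M {\<omega>\<in>space M. X (2 * Suc n) \<omega> \<le> t}) = (\<Sum>n<N. ennreal (?f (2 * n + 1)))"
    by (intro sum.cong refl) (simp add: emeasure_eq_measure)
  also have "\<dots> = ennreal (\<Sum>n<N. ?f (2 * n + 1))" by (rule sum_ennreal) auto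
  also have "(\<Sum>n<N. ?f (2 * n + 1)) = sum ?f ((\<lambda>n. 2 * n + 1) ` {..<N})"
    by (subst sum.reindex) (auto simp: inj_on_def)
  also have "\<dots> \<le> sum ?f {..<2 * N}" by (intro sum_mono2) auto
  also have "\<dots> \<le> c * t" by (rule total)
  finally show "(\<Sum>n<N. emeasure M {\<omega>\<in>space M. X (2 * Suc n) \<omega> \<le> t}) \<le> ennreal (c * t)"
    by (simp add: ennreal_leI)
qed

end


lemma hist_mem:
  assumes "B \<in> sets (borel :: real measure)"
  shows "{\<omega>\<in>space M. X n \<omega> \<in> B} \<in> hist_sets M S X n"
proof -
  have "snd \<in> borel_measurable (borel :: (nat \<times> real) measure)"
    by (intro borel_measurable_continuous_onI continuous_on_snd continuous_on_id)
  from measurable_sets[OF this assms]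
  have "snd -` B \<inter> space (borel :: (nat \<times> real) measure) \<in> sets borel" .
  moreover have "snd -` B \<inter> space (borel :: (nat \<times> real) measure) = UNIV \<times> B" by auto
  ultimately have ub: "UNIV \<times> B \<in> sets (borel :: (nat \<times> real) measure)" by simp
  have eq: "{\<omega>\<in>space M. X n \<omega> \<in> B} = (\<lambda>\<omega>. (S n \<omega>, X n \<omega>)) -` (UNIV \<times> B) \<inter> space M" by auto
  show ?thesis unfolding hist_sets_def eq
    by (rule sigma_sets.Basic) (use ub in blast)
qed

theorem corollary1:
  fixes M :: "'a measure" and S :: "nat \<Rightarrow> 'a \<Rightarrow> nat" and X :: "nat \<Rightarrow> 'a \<Rightarrow> real"
    and kY kZ lY lZ :: "real \<Rightarrow> real" and c :: real
  assumes "alt_semi_markov M S X (gamma_kernel kY lY) (gamma_kernel kZ lZ)"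
    and "kY \<in> borel_measurable borel" "kZ \<in> borel_measurable borel"
    and "lY \<in> borel_measurable borel" "lZ \<in> borel_measurable borel"
    and "\<And>x. 0 \<le> x \<Longrightarrow> 1 \<le> kY x" "\<And>x. 0 \<le> x \<Longrightarrow> 1 \<le> kZ x"
    and "\<And>x. 0 \<le> x \<Longrightarrow> 0 < lY x" "\<And>x. 0 \<le> x \<Longrightarrow> 0 < lZ x"
    and "0 < c"
    and "\<And>x. 0 \<le> x \<Longrightarrow> lY x \<le> c" "\<And>x. 0 \<le> x \<Longrightarrow> lZ x \<le> c"
  shows "\<forall>t\<ge>0. renewal_fun M X t \<le> ennreal (c * t)"
proof (intro allI impI)
  fix t :: real assume t: "0 \<le> t"
  note A = assms(1)[unfolded alt_semi_markov_def]
  have P: "prob_space M" using A by blast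
  have Sm[measurable]: "\<And>n. S n \<in> M \<rightarrow>\<^sub>M count_space UNIV" using A by blast
  have Xm[measurable]: "\<And>n. X n \<in> borel_measurable M" using A by blast
  have X0: "\<And>\<omega>. \<omega> \<in> space M \<Longrightarrow> X 0 \<omega> = 0" using A by blast
  have Xmono: "\<And>n \<omega>. \<omega> \<in> space M \<Longrightarrow> X n \<omega> \<le> X (Suc n) \<omega>" using A by blast
  have kern: "\<And>n \<tau> A. 0 \<le> \<tau> \<Longrightarrow> A \<in> hist_sets M S X n \<Longrightarrow>
        measure M (A \<inter> {\<omega>\<in>space M. X (Suc n) \<omega> - X n \<omega> \<le> \<tau>}) =
        (LINT \<omega>:A|M. (if S n \<omega> = 1 then gamma_kernel kY lY (X n \<omega>) \<tau> else gamma_kernel kZ lZ (X n \<omega>) \<tau>))"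
    using A by blast
  have Xnn: "\<omega> \<in> space M \<Longrightarrow> 0 \<le> X n \<omega>" for n \<omega>
    by (induction n) (auto simp: X0 intro: order_trans[OF _ Xmono])
  define F where "F n \<tau> \<omega> = (if S n \<omega> = 1 then gamma_kernel kY lY (X n \<omega>) \<tau> else gamma_kernel kZ lZ (X n \<omega>) \<tau>)"
    for n \<tau> \<omega>
  have GYm[measurable]: "(\<lambda>x. gamma_kernel kY lY x \<tau>) \<in> borel_measurable borel" for \<tau>
    using assms(2,4) by (rule gamma_kernel_meas)
  have GZm[measurable]: "(\<lambda>x. gamma_kernel kZ lZ x \<tau>) \<in> borel_measurable borel" for \<tau>
    using assms(3,5) by (rule gamma_kernel_meas)
  have Fm: "F n \<tau> \<in> borel_measurable M" for n \<tau>
    unfolding F_def[abs_def] by measurable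
  have ker: "0 \<le> \<tau> \<Longrightarrow> B \<in> sets borel \<Longrightarrow>
       measure M ({\<omega>\<in>space M. X n \<omega> \<in> B} \<inter> {\<omega>\<in>space M. X (Suc n) \<omega> - X n \<omega> \<le> \<tau>})
        = (LINT \<omega>:{\<omega>\<in>space M. X n \<omega> \<in> B}|M. F n \<tau> \<omega>)" for n \<tau> B
    unfolding F_def using kern hist_mem by blast
  have props: "(0 \<le> \<tau> \<longrightarrow> 0 \<le> F n \<tau> \<omega> \<and> F n \<tau> \<omega> \<le> 1) \<and> F n 0 \<omega> = 0 \<and>
       (\<forall>a b. 0 \<le> a \<longrightarrow> a \<le> b \<longrightarrow> F n b \<omega> - F n a \<omega> \<le> c * (b - a) * (1 - F n a \<omega>))"
    if sp: "\<omega> \<in> space M" for n \<tau> \<omega>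
  proof -
    have x: "0 \<le> X n \<omega>" using Xnn[OF sp] .
    note PY = gamma_kernel_props[of kY "X n \<omega>" lY c, OF assms(6)[OF x] assms(8)[OF x] assms(11)[OF x]]
    note PZ = gamma_kernel_props[of kZ "X n \<omega>" lZ c, OF assms(7)[OF x] assms(9)[OF x] assms(12)[OF x]]
    show ?thesis unfolding F_def using PY PZ by auto
  qed
  have "(\<Sum>n. emeasure M {\<omega>\<in>space M. X (2 * Suc n) \<omega> \<le> t}) \<le> ennreal (c * t)"
    by (rule renewal_le[OF P Xm X0 Xmono ker Fm _ _ _ assms(10) t]) (use props in auto)
  thus "renewal_fun M X t \<le> ennreal (c * t)" unfolding renewal_fun_def .
qed

end
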